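(* Let $f:M\to\mathbb{R}^{0,2,1}$ be a non-degenerate $d$-minimal surface. Then $\iota\circ f:M\to\mathbb{R}^4_1$ is a spacelike, flat, zero mean curvature surface in $\mathbb{R}^4_1$.
   Context: $\mathbb{R}^{0,2,1}$ denotes $\mathbb{R}^3$ with coordinates $(x,y,z)$ and the degenerate form $(\cdot,\cdot)=dx^2+dy^2$. A non-degenerate immersion has positive definite induced metric $g=f^*(\cdot,\cdot)$. With $\xi=(0,0,1)$ and $d$ the standard flat connection of $\mathbb{R}^3$, writing $d_X(df(Y))=df(\nabla_XY)+h(X,Y)\xi$ ($\nabla$ the Levi-Civita connection of $g$) defines the second fundamental form $h$, and $f$ is $d$-minimal if $\mathrm{tr}_gh\equiv0$. $\mathbb{R}^4_1$ is $\mathbb{R}^4$ with metric $-dx_1^2+dx_2^2+dx_3^2+dx_4^2$, and $\iota(x,y,z)=(z,x,y,z)$. A surface in $\mathbb{R}^4_1$ is spacelike if its induced metric is positive definite, flat if its Gaussian curvature vanishes, and zero mean curvature if its mean curvature vector field vanishes. *)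

theory Defs
  imports "HOL-Analysis.Analysis"
begin

text \<open>Surfaces are treated via a local parametrisation: M is an open set U of the
  (u0,u1)-plane, coordinate directions are indexed by 0 and 1.\<close>

definition pd :: "nat \<Rightarrow> (real \<times> real \<Rightarrow> 'a::real_normed_vector) \<Rightarrow> real \<times> real \<Rightarrow> 'a" where
  "pd i F p = (if i = 0 then vector_derivative (\<lambda>t. F (t, snd p)) (at (fst p))
               else vector_derivative (\<lambda>t. F (fst p, t)) (at (snd p)))"

definition pd_exists :: "nat \<Rightarrow> (real \<times> real \<Rightarrow> 'a::real_normed_vector) \<Rightarrow> real \<times> real \<Rightarrow> bool" where
  "pd_exists i F p = (if i = 0 then (\<lambda>t. F (t, snd p)) differentiable (at (fst p))
                      else (\<lambda>t. F (fst p, t)) differentiable (at (snd p)))"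

fun ipd :: "nat list \<Rightarrow> (real \<times> real \<Rightarrow> 'a::real_normed_vector) \<Rightarrow> real \<times> real \<Rightarrow> 'a" where
  "ipd [] F = F"
| "ipd (i # is) F = pd i (ipd is F)"

definition smooth_on :: "(real \<times> real) set \<Rightarrow> (real \<times> real \<Rightarrow> 'a::real_normed_vector) \<Rightarrow> bool" where
  "smooth_on U F = (\<forall>is. continuous_on U (ipd is F) \<and>
                       (\<forall>i<2. \<forall>p\<in>U. pd_exists i (ipd is F) p))"

definition ind_metric :: "('a \<Rightarrow> 'a \<Rightarrow> real) \<Rightarrow> (real \<times> real \<Rightarrow> 'a::real_normed_vector)
    \<Rightarrow> real \<times> real \<Rightarrow> nat \<Rightarrow> nat \<Rightarrow> real" where
  "ind_metric B F p i j = B (pd i F p) (pd j F p)"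

definition pos_def_at :: "(real \<times> real \<Rightarrow> nat \<Rightarrow> nat \<Rightarrow> real) \<Rightarrow> real \<times> real \<Rightarrow> bool" where
  "pos_def_at g p = (\<forall>c :: nat \<Rightarrow> real. (c 0, c 1) \<noteq> (0, 0) \<longrightarrow>
                        (\<Sum>i<2. \<Sum>j<2. c i * c j * g p i j) > 0)"

definition det_metric :: "(real \<times> real \<Rightarrow> nat \<Rightarrow> nat \<Rightarrow> real) \<Rightarrow> real \<times> real \<Rightarrow> real" where
  "det_metric g p = g p 0 0 * g p 1 1 - g p 0 1 * g p 1 0"

definition inv_metric :: "(real \<times> real \<Rightarrow> nat \<Rightarrow> nat \<Rightarrow> real) \<Rightarrow> real \<times> real \<Rightarrow> nat \<Rightarrow> nat \<Rightarrow> real" where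
  "inv_metric g p i j =
     (if i = 0 \<and> j = 0 then g p 1 1
      else if i = 1 \<and> j = 1 then g p 0 0
      else - g p i j) / det_metric g p"

definition christoffel :: "(real \<times> real \<Rightarrow> nat \<Rightarrow> nat \<Rightarrow> real) \<Rightarrow> real \<times> real \<Rightarrow> nat \<Rightarrow> nat \<Rightarrow> nat \<Rightarrow> real" where
  "christoffel g p k i j = (1/2) * (\<Sum>l<2. inv_metric g p k l *
      (pd i (\<lambda>q. g q j l) p + pd j (\<lambda>q. g q i l) p - pd l (\<lambda>q. g q i j) p))"

text \<open>Components R^l_{ijk} of the curvature tensor, R(X,Y)Z = nabla_X nabla_Y Z - nabla_Y nabla_X Z - nabla_[X,Y] Z.\<close>
definition riemann :: "(real \<times> real \<Rightarrow> nat \<Rightarrow> nat \<Rightarrow> real) \<Rightarrow> real \<times> real \<Rightarrow> nat \<Rightarrow> nat \<Rightarrow> nat \<Rightarrow> nat \<Rightarrow> real" where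
  "riemann g p l i j k =
     pd i (\<lambda>q. christoffel g q l j k) p - pd j (\<lambda>q. christoffel g q l i k) p
     + (\<Sum>m<2. christoffel g p m j k * christoffel g p l i m
              - christoffel g p m i k * christoffel g p l j m)"

definition gauss_curv :: "(real \<times> real \<Rightarrow> nat \<Rightarrow> nat \<Rightarrow> real) \<Rightarrow> real \<times> real \<Rightarrow> real" where
  "gauss_curv g p = (\<Sum>l<2. riemann g p l 0 1 1 * g p l 0) / det_metric g p"

definition deg_form :: "real \<times> real \<times> real \<Rightarrow> real \<times> real \<times> real \<Rightarrow> real" where
  "deg_form u v = fst u * fst v + fst (snd u) * fst (snd v)"

definition xi :: "real \<times> real \<times> real" where "xi = (0, 0, 1)"

text \<open>Second fundamental form h of f in R^{0,2,1}: d_{d_i}(df(d_j)) = df(nabla_{d_i} d_j) + h_{ij} xi,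
  so h_{ij} is the xi-coefficient (z-component) of f_{ij} - Gamma^k_{ij} f_k.\<close>
definition sff_d :: "(real \<times> real \<Rightarrow> real \<times> real \<times> real) \<Rightarrow> real \<times> real \<Rightarrow> nat \<Rightarrow> nat \<Rightarrow> real" where
  "sff_d f p i j = snd (snd (pd i (pd j f) p
       - (\<Sum>k<2. christoffel (ind_metric deg_form f) p k i j *\<^sub>R pd k f p)))"

definition nondegenerate :: "(real \<times> real) set \<Rightarrow> (real \<times> real \<Rightarrow> real \<times> real \<times> real) \<Rightarrow> bool" where
  "nondegenerate U f = (\<forall>p\<in>U. pos_def_at (ind_metric deg_form f) p)"

definition d_minimal :: "(real \<times> real) set \<Rightarrow> (real \<times> real \<Rightarrow> real \<times> real \<times> real) \<Rightarrow> bool" where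
  "d_minimal U f = (\<forall>p\<in>U. (\<Sum>i<2. \<Sum>j<2. inv_metric (ind_metric deg_form f) p i j * sff_d f p i j) = 0)"

definition mink :: "real \<times> real \<times> real \<times> real \<Rightarrow> real \<times> real \<times> real \<times> real \<Rightarrow> real" where
  "mink u v = - fst u * fst v + fst (snd u) * fst (snd v)
              + fst (snd (snd u)) * fst (snd (snd v)) + snd (snd (snd u)) * snd (snd (snd v))"

definition iota :: "real \<times> real \<times> real \<Rightarrow> real \<times> real \<times> real \<times> real" where
  "iota u = (case u of (x, y, z) \<Rightarrow> (z, x, y, z))"

definition spacelike :: "(real \<times> real) set \<Rightarrow> (real \<times> real \<Rightarrow> real \<times> real \<times> real \<times> real) \<Rightarrow> bool" where
  "spacelike U F = (\<forall>p\<in>U. pos_def_at (ind_metric mink F) p)"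

definition flat :: "(real \<times> real) set \<Rightarrow> (real \<times> real \<Rightarrow> real \<times> real \<times> real \<times> real) \<Rightarrow> bool" where
  "flat U F = (\<forall>p\<in>U. gauss_curv (ind_metric mink F) p = 0)"

text \<open>Mean curvature vector H = (1/2) tr_g II, where II(d_i,d_j) = normal part of F_{ij}
  = F_{ij} - Gamma^k_{ij} F_k.\<close>
definition mean_curv_vec :: "(real \<times> real \<Rightarrow> real \<times> real \<times> real \<times> real) \<Rightarrow> real \<times> real \<Rightarrow> real \<times> real \<times> real \<times> real" where
  "mean_curv_vec F p = (1/2) *\<^sub>R (\<Sum>i<2. \<Sum>j<2. inv_metric (ind_metric mink F) p i j *\<^sub>R
       (pd i (pd j F) p - (\<Sum>k<2. christoffel (ind_metric mink F) p k i j *\<^sub>R pd k F p)))"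

definition zero_mean_curv :: "(real \<times> real) set \<Rightarrow> (real \<times> real \<Rightarrow> real \<times> real \<times> real \<times> real) \<Rightarrow> bool" where
  "zero_mean_curv U F = (\<forall>p\<in>U. mean_curv_vec F p = 0)"

end

theory Submission
  imports Defs
begin

definition shift :: "nat \<Rightarrow> real \<times> real \<Rightarrow> real \<Rightarrow> real \<times> real" where
  "shift i p t = (if i = 0 then (t, snd p) else (fst p, t))"
definition coord :: "nat \<Rightarrow> real \<times> real \<Rightarrow> real" where
  "coord i p = (if i = 0 then fst p else snd p)"

lemma shift_coord[simp]: "shift i p (coord i p) = p"
  by (simp add: shift_def coord_def)

lemma continuous_shift: "continuous_on UNIV (shift i p)"
  unfolding shift_def by (cases "i = 0") (auto intro!: continuous_intros)

lemma pd_alt: "pd i F p = vector_derivative (\<lambda>t. F (shift i p t)) (at (coord i p))"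
  unfolding pd_def shift_def coord_def by (cases "i = 0") auto

lemma pd_exists_alt: "pd_exists i F p = ((\<lambda>t. F (shift i p t)) differentiable (at (coord i p)))"
  unfolding pd_exists_def shift_def coord_def by (cases "i = 0") auto

definition hvd :: "nat \<Rightarrow> (real \<times> real \<Rightarrow> 'a::real_normed_vector) \<Rightarrow> 'a \<Rightarrow> real \<times> real \<Rightarrow> bool" where
  "hvd i F v p = ((\<lambda>t. F (shift i p t)) has_vector_derivative v) (at (coord i p))"

lemma pd_exists_hvd: "pd_exists i F p \<Longrightarrow> hvd i F (pd i F p) p"
  unfolding pd_exists_alt pd_alt hvd_def by (simp add: vector_derivative_works)

lemma hvd_pd: "hvd i F v p \<Longrightarrow> pd i F p = v"
  unfolding pd_alt hvd_def by (simp add: vector_derivative_at)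

lemma hvd_pd_exists: "hvd i F v p \<Longrightarrow> pd_exists i F p"
  unfolding pd_exists_alt hvd_def by (rule differentiableI_vector)

lemma local_set:
  assumes "open V" "p \<in> V"
  shows "open {t. shift i p t \<in> V} \<and> coord i p \<in> {t. shift i p t \<in> V}"
proof
  have "open (shift i p -` V)"
    using continuous_shift[of i p] assms(1) by (simp add: continuous_on_open_vimage)
  then show "open {t. shift i p t \<in> V}" by (simp add: vimage_def)
  show "coord i p \<in> {t. shift i p t \<in> V}" using assms by simp
qed

lemma hvd_local:
  assumes "open V" "p \<in> V" "\<And>q. q \<in> V \<Longrightarrow> F q = G q"
  shows "hvd i F v p \<longleftrightarrow> hvd i G v p"
proof -
  let ?S = "{t. shift i p t \<in> V}"
  have S: "open ?S" "coord i p \<in> ?S" using local_set[OF assms(1,2), of i] by auto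
  have e: "\<And>t. t \<in> ?S \<Longrightarrow> F (shift i p t) = G (shift i p t)" using assms(3) by auto
  show ?thesis unfolding hvd_def
  proof
    assume a: "((\<lambda>t. F (shift i p t)) has_vector_derivative v) (at (coord i p))"
    show "((\<lambda>t. G (shift i p t)) has_vector_derivative v) (at (coord i p))"
      using has_vector_derivative_transform_within_open[OF a S(1) S(2), of "\<lambda>t. G (shift i p t)"] e by simp
  next
    assume a: "((\<lambda>t. G (shift i p t)) has_vector_derivative v) (at (coord i p))"
    show "((\<lambda>t. F (shift i p t)) has_vector_derivative v) (at (coord i p))"
      using has_vector_derivative_transform_within_open[OF a S(1) S(2), of "\<lambda>t. F (shift i p t)"] e by simp
  qed
qed

lemma pd_local:
  assumes "open V" "p \<in> V" "\<And>q. q \<in> V \<Longrightarrow> F q = G q"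
  shows "pd i F p = pd i G p"
proof -
  have "\<And>v. hvd i F v p \<longleftrightarrow> hvd i G v p" using hvd_local[of V p F G] assms by blast
  then show ?thesis unfolding pd_alt vector_derivative_def hvd_def by simp
qed

lemma pd_exists_local:
  assumes "open V" "p \<in> V" "\<And>q. q \<in> V \<Longrightarrow> F q = G q"
  shows "pd_exists i F p \<longleftrightarrow> pd_exists i G p"
proof
  assume "pd_exists i F p"
  then have "hvd i F (pd i F p) p" by (rule pd_exists_hvd)
  then have "hvd i G (pd i F p) p" using hvd_local[of V p F G] assms by blast
  then show "pd_exists i G p" by (rule hvd_pd_exists)
next
  assume "pd_exists i G p"
  then have "hvd i G (pd i G p) p" by (rule pd_exists_hvd)
  then have "hvd i F (pd i G p) p" using hvd_local[of V p F G] assms by blast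
  then show "pd_exists i F p" by (rule hvd_pd_exists)
qed

lemma hvd_linear:
  assumes "bounded_linear L" "hvd i F v p"
  shows "hvd i (L \<circ> F) (L v) p"
  using bounded_linear.has_vector_derivative[OF assms(1)] assms(2) unfolding hvd_def o_def
  by blast

lemma pd_linear:
  assumes "bounded_linear L" "pd_exists i F p"
  shows "pd i (L \<circ> F) p = L (pd i F p)" "pd_exists i (L \<circ> F) p"
  using hvd_linear[OF assms(1) pd_exists_hvd[OF assms(2)]] hvd_pd hvd_pd_exists by blast+

lemma smooth_pd_exists:
  assumes "smooth_on U F" "p \<in> U"
  shows "pd_exists i (ipd is F) p"
proof -
  have "pd_exists (if i = 0 then 0 else 1) (ipd is F) p"
    using assms unfolding smooth_on_def by auto
  then show ?thesis unfolding pd_exists_def by (cases "i = 0") auto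
qed

lemma smooth_linear_ipd:
  assumes "open U" "smooth_on U F" "bounded_linear L"
  shows "\<forall>q\<in>U. ipd is (L \<circ> F) q = L (ipd is F q)"
proof (induction "is")
  case Nil
  then show ?case by simp
next
  case (Cons i "is")
  show ?case
  proof
    fix q assume q: "q \<in> U"
    have "ipd (i # is) (L \<circ> F) q = pd i (ipd is (L \<circ> F)) q" by simp
    also have "\<dots> = pd i (L \<circ> ipd is F) q"
      using pd_local[OF assms(1) q, of "ipd is (L \<circ> F)" "L \<circ> ipd is F"] Cons by auto
    also have "\<dots> = L (pd i (ipd is F) q)"
      using pd_linear(1)[OF assms(3) smooth_pd_exists[OF assms(2) q]] by simp
    finally show "ipd (i # is) (L \<circ> F) q = L (ipd (i # is) F q)" by simp
  qed
qed

lemma smooth_linear: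
  assumes "open U" "smooth_on U F" "bounded_linear L"
  shows "smooth_on U (L \<circ> F)"
  unfolding smooth_on_def
proof (intro allI conjI ballI impI)
  fix "is"
  have eq: "\<forall>q\<in>U. ipd is (L \<circ> F) q = (L \<circ> ipd is F) q"
    using smooth_linear_ipd[OF assms] by simp
  have "continuous_on U (\<lambda>q. L (ipd is F q))"
    using assms(2,3) unfolding smooth_on_def
    by (intro bounded_linear.continuous_on[OF assms(3)]) auto
  then have "continuous_on U (L \<circ> ipd is F)" by (simp add: o_def)
  then show "continuous_on U (ipd is (L \<circ> F))"
    using continuous_on_eq[of U "L \<circ> ipd is F" "ipd is (L \<circ> F)"] eq by simp
  fix i p assume "i < (2::nat)" "p \<in> U"
  have "pd_exists i (L \<circ> ipd is F) p"
    using pd_linear(2)[OF assms(3) smooth_pd_exists[OF assms(2) \<open>p\<in>U\<close>]] .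
  then show "pd_exists i (ipd is (L \<circ> F)) p"
    using pd_exists_local[OF assms(1) \<open>p\<in>U\<close>, of "ipd is (L \<circ> F)" "L \<circ> ipd is F"] eq by auto
qed

lemma smooth_pd:
  assumes "smooth_on U F" shows "smooth_on U (pd j F)"
proof -
  have "ipd is (pd j F) = ipd (is @ [j]) F" for "is"
    by (induction "is") auto
  then show ?thesis using assms unfolding smooth_on_def by metis
qed


lemma hvd_real: "hvd i (F::real\<times>real\<Rightarrow>real) v p \<longleftrightarrow> ((\<lambda>t. F (shift i p t)) has_real_derivative v) (at (coord i p))"
  by (simp add: hvd_def has_real_derivative_iff_has_vector_derivative)

lemma hvd_mult: assumes "hvd i F a p" "hvd i G b p" shows "hvd i (\<lambda>q. F q * G q :: real) (a * G p + F p * b) p"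
  using DERIV_mult[OF assms(1,2)[unfolded hvd_real]] assms unfolding hvd_real by (simp add: mult.commute)

lemma hvd_add: assumes "hvd i F a p" "hvd i G b p" shows "hvd i (\<lambda>q. F q + G q :: real) (a + b) p"
  using DERIV_add[OF assms(1,2)[unfolded hvd_real]] assms unfolding hvd_real by simp

lemma hvd_diff: assumes "hvd i F a p" "hvd i G b p" shows "hvd i (\<lambda>q. F q - G q :: real) (a - b) p"
  using DERIV_diff[OF assms(1,2)[unfolded hvd_real]] assms unfolding hvd_real by simp

lemma hvd_divide: assumes "hvd i F a p" "hvd i G b p" "G p \<noteq> 0" shows
   "hvd i (\<lambda>q. F q / G q :: real) ((a * G p - F p * b) / (G p * G p)) p"
  using DERIV_divide[OF assms(1,2)[unfolded hvd_real]] assms unfolding hvd_real by simp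

lemma shift_simps[simp]: "shift 0 (s, t) u = (u, t)" "shift (Suc 0) (s, t) u = (s, u)"
  "coord 0 (s, t) = s" "coord (Suc 0) (s, t) = t"
  by (simp_all add: shift_def coord_def)

lemma smooth_hvd: "smooth_on U F \<Longrightarrow> q \<in> U \<Longrightarrow> hvd i (ipd is F) (pd i (ipd is F) q) q"
  by (rule pd_exists_hvd, rule smooth_pd_exists)

lemma deriv0: "smooth_on U F \<Longrightarrow> (s, t) \<in> U \<Longrightarrow>
   ((\<lambda>u. ipd is F (u, t)) has_real_derivative pd 0 (ipd is F) (s, t)) (at s)"
  using smooth_hvd[of U F "(s,t)" 0 "is"] unfolding hvd_real by simp

lemma deriv1: "smooth_on U F \<Longrightarrow> (s, t) \<in> U \<Longrightarrow>
   ((\<lambda>u. ipd is F (s, u)) has_real_derivative pd 1 (ipd is F) (s, t)) (at t)"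
  using smooth_hvd[of U F "(s,t)" 1 "is"] unfolding hvd_real by simp

lemma box_dist:
  fixes a b s t h :: real
  assumes "a \<le> s" "s \<le> a + h" "b \<le> t" "t \<le> b + h" "h > 0"
  shows "dist (s, t) (a, b) < 2 * h"
proof -
  have "(s - a)\<^sup>2 + (t - b)\<^sup>2 \<le> h\<^sup>2 + h\<^sup>2"
    using assms by (intro add_mono power_mono) auto
  also have "\<dots> < (2 * h)\<^sup>2" using assms by (simp add: power2_eq_square)
  finally have "sqrt ((s - a)\<^sup>2 + (t - b)\<^sup>2) < 2 * h"
    using assms by (simp add: real_sqrt_less_iff real_less_lsqrt)
  then show ?thesis by (simp add: dist_Pair_Pair dist_real_def)
qed

lemma clairaut:
  fixes F :: "real \<times> real \<Rightarrow> real"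
  assumes U: "open U" and sm: "smooth_on U F" and pU: "p \<in> U"
  shows "pd 0 (pd 1 F) p = pd 1 (pd 0 F) p"
proof (rule ccontr)
  obtain a b where p: "p = (a, b)" by (cases p)
  define A where "A = pd 1 (pd 0 F) p"
  define B where "B = pd 0 (pd 1 F) p"
  assume "pd 0 (pd 1 F) p \<noteq> pd 1 (pd 0 F) p"
  then have AB: "A \<noteq> B" by (simp add: A_def B_def)
  define e where "e = \<bar>A - B\<bar> / 2"
  have e: "e > 0" using AB by (simp add: e_def)
  have c1: "continuous_on U (pd 1 (pd 0 F))"
    using sm unfolding smooth_on_def by (metis ipd.simps)
  have c2: "continuous_on U (pd 0 (pd 1 F))"
    using sm unfolding smooth_on_def by (metis ipd.simps)
  obtain d1 where d1: "d1 > 0" "\<And>q. q \<in> U \<Longrightarrow> dist q p < d1 \<Longrightarrow> dist (pd 1 (pd 0 F) q) A < e"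
    using c1 pU e unfolding continuous_on_iff A_def by metis
  obtain d2 where d2: "d2 > 0" "\<And>q. q \<in> U \<Longrightarrow> dist q p < d2 \<Longrightarrow> dist (pd 0 (pd 1 F) q) B < e"
    using c2 pU e unfolding continuous_on_iff B_def by metis
  obtain d0 where d0: "d0 > 0" "ball p d0 \<subseteq> U"
    using U pU open_contains_ball by blast
  define h where "h = min d0 (min d1 d2) / 2"
  have h: "h > 0" using d0 d1 d2 by (simp add: h_def)
  have inbox: "dist (s, t) p < d0 \<and> dist (s, t) p < d1 \<and> dist (s, t) p < d2"
    if "a \<le> s" "s \<le> a + h" "b \<le> t" "t \<le> b + h" for s t
    using box_dist[OF that h] unfolding p h_def by linarith
  have inU: "(s, t) \<in> U" if "a \<le> s" "s \<le> a + h" "b \<le> t" "t \<le> b + h" for s t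
    using inbox[OF that] d0(2) by (auto simp: dist_commute)
  define \<Delta> where "\<Delta> = F (a+h, b+h) - F (a+h, b) - F (a, b+h) + F (a, b)"
  have "\<exists>z. a < z \<and> z < a + h \<and>
      (F (a+h, b+h) - F (a+h, b)) - (F (a, b+h) - F (a, b)) = ((a + h) - a) * (pd 0 F (z, b+h) - pd 0 F (z, b))"
    apply (rule MVT2[where f = "\<lambda>s. F (s, b+h) - F (s, b)"])
    using h apply simp
    apply (rule DERIV_diff)
    using deriv0[OF sm inU, of _ "b+h" "[]"] deriv0[OF sm inU, of _ b "[]"] h by auto
  then obtain \<xi> where \<xi>: "a < \<xi>" "\<xi> < a + h" "\<Delta> = h * (pd 0 F (\<xi>, b+h) - pd 0 F (\<xi>, b))"
    unfolding \<Delta>_def by auto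
  have "\<exists>z. b < z \<and> z < b + h \<and>
      pd 0 F (\<xi>, b+h) - pd 0 F (\<xi>, b) = ((b + h) - b) * pd 1 (pd 0 F) (\<xi>, z)"
    apply (rule MVT2[where f = "\<lambda>t. pd 0 F (\<xi>, t)"])
    using h apply simp
    using deriv1[OF sm inU, of \<xi> _ "[0]"] \<xi> by auto
  then obtain \<eta> where \<eta>: "b < \<eta>" "\<eta> < b + h" "\<Delta> = h * (h * pd 1 (pd 0 F) (\<xi>, \<eta>))"
    using \<xi> by auto
  have "\<exists>z. b < z \<and> z < b + h \<and>
      (F (a+h, b+h) - F (a, b+h)) - (F (a+h, b) - F (a, b)) = ((b + h) - b) * (pd 1 F (a+h, z) - pd 1 F (a, z))"
    apply (rule MVT2[where f = "\<lambda>t. F (a+h, t) - F (a, t)"])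
    using h apply simp
    apply (rule DERIV_diff)
    using deriv1[OF sm inU, of "a+h" _ "[]"] deriv1[OF sm inU, of a _ "[]"] h by auto
  then obtain \<eta>' where \<eta>': "b < \<eta>'" "\<eta>' < b + h" "\<Delta> = h * (pd 1 F (a+h, \<eta>') - pd 1 F (a, \<eta>'))"
    unfolding \<Delta>_def by (auto simp: algebra_simps)
  have "\<exists>z. a < z \<and> z < a + h \<and>
      pd 1 F (a+h, \<eta>') - pd 1 F (a, \<eta>') = ((a + h) - a) * pd 0 (pd 1 F) (z, \<eta>')"
    apply (rule MVT2[where f = "\<lambda>s. pd 1 F (s, \<eta>')"])
    using h apply simp
    using deriv0[OF sm inU, of _ \<eta>' "[1]"] \<eta>' by auto
  then obtain \<xi>' where \<xi>': "a < \<xi>'" "\<xi>' < a + h" "\<Delta> = h * (h * pd 0 (pd 1 F) (\<xi>', \<eta>'))"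
    using \<eta>' by auto
  have eq: "pd 1 (pd 0 F) (\<xi>, \<eta>) = pd 0 (pd 1 F) (\<xi>', \<eta>')"
    using \<eta>(3) \<xi>'(3) h by simp
  have "dist (pd 1 (pd 0 F) (\<xi>, \<eta>)) A < e"
    using d1(2)[OF inU inbox[THEN conjunct2, THEN conjunct1]] \<xi> \<eta> by auto
  moreover have "dist (pd 0 (pd 1 F) (\<xi>', \<eta>')) B < e"
    using d2(2)[OF inU inbox[THEN conjunct2, THEN conjunct2]] \<xi>' \<eta>' by auto
  moreover have "\<And>v::real. \<bar>v - A\<bar> < \<bar>A - B\<bar> / 2 \<Longrightarrow> \<bar>v - B\<bar> < \<bar>A - B\<bar> / 2 \<Longrightarrow> False"
    by (simp add: abs_if split: if_splits)
  ultimately show False using eq unfolding e_def dist_real_def by metis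
qed


lemma bl_fst2: "bounded_linear (\<lambda>v::real\<times>real\<times>real. fst (snd v))"
  using bounded_linear_compose[OF bounded_linear_fst bounded_linear_snd] by simp
lemma bl_snd2: "bounded_linear (\<lambda>v::real\<times>real\<times>real. snd (snd v))"
  using bounded_linear_compose[OF bounded_linear_snd bounded_linear_snd] by simp

lemma iota_alt: "iota u = (snd (snd u), fst u, fst (snd u), snd (snd u))"
  unfolding iota_def by (cases u) auto

lemma bl_iota: "bounded_linear iota"
proof -
  have "bounded_linear (\<lambda>u::real\<times>real\<times>real. (snd (snd u), fst u, fst (snd u), snd (snd u)))"
    by (intro bounded_linear_Pair bl_fst2 bl_snd2 bounded_linear_fst)
  then show ?thesis unfolding iota_alt[abs_def] .
qed

lemma sum2: "(\<Sum>i<2. F i) = F 0 + F (1::nat)"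
  by (simp add: numeral_2_eq_2)

lemma sym_smooth:
  fixes G :: "real \<times> real \<Rightarrow> real"
  assumes "open U" "smooth_on U G" "p \<in> U" "a < 2" "b < 2"
  shows "pd a (pd b G) p = pd b (pd a G) p"
  using clairaut[OF assms(1-3)] assms(4,5)
  by (cases "a = b"; cases "a = 0") (auto simp: less_2_cases_iff)

context
  fixes U :: "(real \<times> real) set" and f :: "real \<times> real \<Rightarrow> real \<times> real \<times> real"
  assumes U: "open U" and sm: "smooth_on U f" and nd: "nondegenerate U f"
begin

definition "X = fst \<circ> f"
definition "Y = (\<lambda>v. fst (snd v)) \<circ> f"
definition "Z = (\<lambda>v. snd (snd v)) \<circ> f"

lemma smX: "smooth_on U X" unfolding X_def by (rule smooth_linear[OF U sm bounded_linear_fst])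
lemma smY: "smooth_on U Y" unfolding Y_def by (rule smooth_linear[OF U sm bl_fst2])
lemma smZ: "smooth_on U Z" unfolding Z_def by (rule smooth_linear[OF U sm bl_snd2])

lemma ipd_f: "q \<in> U \<Longrightarrow> ipd is f q = (ipd is X q, ipd is Y q, ipd is Z q)"
  using smooth_linear_ipd[OF U sm bounded_linear_fst, of "is"]
    smooth_linear_ipd[OF U sm bl_fst2, of "is"] smooth_linear_ipd[OF U sm bl_snd2, of "is"]
  unfolding X_def Y_def Z_def by (simp add: prod_eq_iff)

lemma pd_f: "q \<in> U \<Longrightarrow> pd i f q = (pd i X q, pd i Y q, pd i Z q)"
  using ipd_f[of q "[i]"] by simp

lemma pd2_f: "q \<in> U \<Longrightarrow> pd i (pd j f) q = (pd i (pd j X) q, pd i (pd j Y) q, pd i (pd j Z) q)"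
  using ipd_f[of q "[i,j]"] by simp

lemma ipd_iota: "q \<in> U \<Longrightarrow> ipd is (iota \<circ> f) q = iota (ipd is f q)"
  using smooth_linear_ipd[OF U sm bl_iota] by simp

abbreviation "g \<equiv> ind_metric deg_form f"
abbreviation "gI \<equiv> ind_metric mink (iota \<circ> f)"

lemma g_eq: "q \<in> U \<Longrightarrow> g q i j = pd i X q * pd j X q + pd i Y q * pd j Y q"
  unfolding ind_metric_def deg_form_def using pd_f by simp

lemma gI_eq: "q \<in> U \<Longrightarrow> gI q i j = g q i j"
  unfolding ind_metric_def using ipd_iota[of q "[i]"] ipd_iota[of q "[j]"]
  by (simp add: iota_alt mink_def deg_form_def)

lemma dg: "p \<in> U \<Longrightarrow> pd k (\<lambda>q. g q i j) p =
   (pd k (pd i X) p * pd j X p + pd i X p * pd k (pd j X) p) +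
   (pd k (pd i Y) p * pd j Y p + pd i Y p * pd k (pd j Y) p)"
proof -
  assume p: "p \<in> U"
  have "pd k (\<lambda>q. g q i j) p = pd k (\<lambda>q. pd i X q * pd j X q + pd i Y q * pd j Y q) p"
    by (rule pd_local[OF U p]) (rule g_eq)
  also have "\<dots> = (pd k (pd i X) p * pd j X p + pd i X p * pd k (pd j X) p) +
   (pd k (pd i Y) p * pd j Y p + pd i Y p * pd k (pd j Y) p)"
    using smooth_hvd[OF smX p, of k "[i]"] smooth_hvd[OF smX p, of k "[j]"]
      smooth_hvd[OF smY p, of k "[i]"] smooth_hvd[OF smY p, of k "[j]"]
    by (intro hvd_pd hvd_add hvd_mult) simp_all
  finally show ?thesis .
qed

definition "Dt q = pd 0 X q * pd 1 Y q - pd 1 X q * pd 0 Y q"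

lemma Dt_nz: "p \<in> U \<Longrightarrow> Dt p \<noteq> 0"
proof
  assume p: "p \<in> U" and D0: "Dt p = 0"
  have pos: "pos_def_at g p" using nd p unfolding nondegenerate_def by blast
  define x0 where "x0 = pd 0 X p"
  define x1 where "x1 = pd 1 X p"
  define y0 where "y0 = pd 0 Y p"
  define y1 where "y1 = pd 1 Y p"
  have D: "x0 * y1 - x1 * y0 = 0" using D0 unfolding Dt_def x0_def x1_def y0_def y1_def by simp
  have Q: "(\<Sum>i<2. \<Sum>j<2. c i * c j * g p i j) = (c 0 * x0 + c 1 * x1)\<^sup>2 + (c 0 * y0 + c 1 * y1)\<^sup>2" for c
  proof -
    have "(\<Sum>i<2. \<Sum>j<2. c i * c j * g p i j) =
      c 0 * c 0 * (x0 * x0 + y0 * y0) + c 0 * c 1 * (x0 * x1 + y0 * y1)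
      + c 1 * c 0 * (x1 * x0 + y1 * y0) + c 1 * c 1 * (x1 * x1 + y1 * y1)"
      unfolding sum2 g_eq[OF p] x0_def x1_def y0_def y1_def by simp
    also have "\<dots> = (c 0 * x0 + c 1 * x1)\<^sup>2 + (c 0 * y0 + c 1 * y1)\<^sup>2"
      unfolding power2_eq_square by algebra
    finally show ?thesis .
  qed
  have key: "\<exists>a b. (a, b) \<noteq> (0, 0) \<and> a * x0 + b * x1 = 0 \<and> a * y0 + b * y1 = 0"
  proof (cases "x1 = 0 \<and> x0 = 0")
    case False
    have "x1 * y0 + (- x0) * y1 = 0" using D by algebra
    then show ?thesis using False by (intro exI[of _ x1] exI[of _ "- x0"]) (auto simp: mult.commute)
  next
    case xx: True
    show ?thesis
    proof (cases "y1 = 0 \<and> y0 = 0")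
      case False
      have "y1 * x0 + (- y0) * x1 = 0" using D by algebra
      then show ?thesis using False by (intro exI[of _ y1] exI[of _ "- y0"]) (auto simp: mult.commute)
    next
      case True
      then show ?thesis using xx by (intro exI[of _ 1] exI[of _ 0]) auto
    qed
  qed
  then obtain a b where ab: "(a, b) \<noteq> (0, 0)" "a * x0 + b * x1 = 0" "a * y0 + b * y1 = 0" by blast
  define c :: "nat \<Rightarrow> real" where "c = (\<lambda>n. if n = 0 then a else b)"
  have "(c 0, c 1) \<noteq> (0, 0)" using ab(1) by (simp add: c_def)
  then have "(\<Sum>i<2. \<Sum>j<2. c i * c j * g p i j) > 0" using pos unfolding pos_def_at_def by blast
  moreover have "(\<Sum>i<2. \<Sum>j<2. c i * c j * g p i j) = 0" using Q[of c] ab by (simp add: c_def)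
  ultimately show False by simp
qed

lemma det_g: "p \<in> U \<Longrightarrow> det_metric g p = (Dt p)\<^sup>2"
  unfolding det_metric_def Dt_def by (simp add: g_eq power2_eq_square algebra_simps)

definition "Gm (k::nat) i j q = (if k = 0 then pd 1 Y q * pd i (pd j X) q - pd 1 X q * pd i (pd j Y) q
   else pd 0 X q * pd i (pd j Y) q - pd 0 Y q * pd i (pd j X) q) / Dt q"

lemma bracket: assumes p: "p \<in> U" and ij: "i < 2" "j < 2" "l < 2"
  shows "pd i (\<lambda>q. g q j l) p + pd j (\<lambda>q. g q i l) p - pd l (\<lambda>q. g q i j) p
     = 2 * (pd i (pd j X) p * pd l X p + pd i (pd j Y) p * pd l Y p)"
proof -
  have e: "pd j (pd i X) p = pd i (pd j X) p" "pd j (pd i Y) p = pd i (pd j Y) p"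
    "pd l (pd i X) p = pd i (pd l X) p" "pd l (pd i Y) p = pd i (pd l Y) p"
    "pd l (pd j X) p = pd j (pd l X) p" "pd l (pd j Y) p = pd j (pd l Y) p"
    using sym_smooth[OF U smX p] sym_smooth[OF U smY p] ij by auto
  show ?thesis unfolding dg[OF p] e by (simp add: algebra_simps)
qed

lemma frac_aux: fixes a1 u1 a2 u2 m dd :: real assumes "dd \<noteq> 0" "a1*u1 + a2*u2 = m*dd"
  shows "a1/dd\<^sup>2*u1 + a2/dd\<^sup>2*u2 = m/dd"
proof -
  have "a1/dd\<^sup>2*u1 + a2/dd\<^sup>2*u2 = (a1*u1 + a2*u2)/dd\<^sup>2" by (simp add: add_divide_distrib)
  also have "\<dots> = m*dd/(dd*dd)" using assms(2) by (simp add: power2_eq_square)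
  also have "\<dots> = m/dd" using assms(1) by simp
  finally show ?thesis .
qed
lemma chr_alg0: fixes x0 x1 y0 y1 a b :: real assumes nz: "x0*y1 - x1*y0 \<noteq> 0"
  shows "(x1*x1 + y1*y1)/(x0*y1 - x1*y0)\<^sup>2 * (a*x0 + b*y0) + (-(x0*x1 + y0*y1))/(x0*y1 - x1*y0)\<^sup>2 * (a*x1 + b*y1)
     = (y1*a - x1*b)/(x0*y1 - x1*y0)"
  by (rule frac_aux[OF nz]) algebra
lemma chr_alg1: fixes x0 x1 y0 y1 a b :: real assumes nz: "x0*y1 - x1*y0 \<noteq> 0"
  shows "(-(x1*x0 + y1*y0))/(x0*y1 - x1*y0)\<^sup>2 * (a*x0 + b*y0) + (x0*x0 + y0*y0)/(x0*y1 - x1*y0)\<^sup>2 * (a*x1 + b*y1)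
     = (x0*b - y0*a)/(x0*y1 - x1*y0)"
  by (rule frac_aux[OF nz]) algebra

lemma chr: assumes p: "p \<in> U" and ij: "i < 2" "j < 2" and k: "k < 2"
  shows "christoffel g p k i j = Gm k i j p"
proof -
  have nz: "Dt p \<noteq> 0" using Dt_nz[OF p] .
  have "christoffel g p k i j = (\<Sum>l<2. inv_metric g p k l * (pd i (pd j X) p * pd l X p + pd i (pd j Y) p * pd l Y p))"
    unfolding christoffel_def sum2 using bracket[OF p ij, of 0] bracket[OF p ij, of 1] by (simp add: algebra_simps)
  also have "\<dots> = Gm k i j p"
  proof -
    have nz': "pd 0 X p * pd 1 Y p - pd 1 X p * pd 0 Y p \<noteq> 0" using nz unfolding Dt_def .
    have "k = 0 \<or> k = 1" using k by auto
    then show ?thesis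
    proof
      assume k0: "k = 0"
      show ?thesis
        unfolding k0 sum2 inv_metric_def det_g[OF p] Gm_def g_eq[OF p] Dt_def
        using chr_alg0[OF nz', of "pd i (pd j X) p" "pd i (pd j Y) p"] by simp
    next
      assume k1: "k = 1"
      show ?thesis
        unfolding k1 sum2 inv_metric_def det_g[OF p] Gm_def g_eq[OF p] Dt_def
        using chr_alg1[OF nz', of "pd i (pd j X) p" "pd i (pd j Y) p"] by simp
    qed
  qed
  finally show ?thesis .
qed

lemma chrI: assumes q: "q \<in> U" shows "christoffel gI q k i j = christoffel g q k i j"
proof -
  have d: "\<And>a b c. pd a (\<lambda>q. gI q b c) q = pd a (\<lambda>q. g q b c) q"
    by (rule pd_local[OF U q]) (rule gI_eq)
  show ?thesis unfolding christoffel_def inv_metric_def det_metric_def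
    by (simp only: d gI_eq[OF q])
qed

lemma riemannI: assumes p: "p \<in> U" shows "riemann gI p l i j k = riemann g p l i j k"
proof -
  have d: "\<And>a b c d. pd a (\<lambda>q. christoffel gI q b c d) p = pd a (\<lambda>q. christoffel g q b c d) p"
    by (rule pd_local[OF U p]) (rule chrI)
  show ?thesis unfolding riemann_def by (simp only: d chrI[OF p])
qed

definition "N0 i j q = pd 1 Y q * pd i (pd j X) q - pd 1 X q * pd i (pd j Y) q"
definition "N1 i j q = pd 0 X q * pd i (pd j Y) q - pd 0 Y q * pd i (pd j X) q"

lemma Gm0: "Gm 0 i j = (\<lambda>q. N0 i j q / Dt q)" unfolding Gm_def N0_def by auto
lemma Gm1: "Gm 1 i j = (\<lambda>q. N1 i j q / Dt q)" unfolding Gm_def N1_def by auto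

lemma hvd_Dt: assumes p: "p \<in> U" shows "hvd a Dt
  ((pd a (pd 0 X) p * pd 1 Y p + pd 0 X p * pd a (pd 1 Y) p) - (pd a (pd 1 X) p * pd 0 Y p + pd 1 X p * pd a (pd 0 Y) p)) p"
  unfolding Dt_def[abs_def]
  using smooth_hvd[OF smX p, of a "[0]"] smooth_hvd[OF smX p, of a "[1]"]
    smooth_hvd[OF smY p, of a "[0]"] smooth_hvd[OF smY p, of a "[1]"]
  by (intro hvd_diff hvd_mult) simp_all

lemma hvd_N0: assumes p: "p \<in> U" shows "hvd a (N0 i j)
  ((pd a (pd 1 Y) p * pd i (pd j X) p + pd 1 Y p * pd a (pd i (pd j X)) p) - (pd a (pd 1 X) p * pd i (pd j Y) p + pd 1 X p * pd a (pd i (pd j Y)) p)) p"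
  unfolding N0_def[abs_def]
  using smooth_hvd[OF smX p, of a "[1]"] smooth_hvd[OF smX p, of a "[i,j]"]
    smooth_hvd[OF smY p, of a "[1]"] smooth_hvd[OF smY p, of a "[i,j]"]
  by (intro hvd_diff hvd_mult) simp_all

lemma hvd_N1: assumes p: "p \<in> U" shows "hvd a (N1 i j)
  ((pd a (pd 0 X) p * pd i (pd j Y) p + pd 0 X p * pd a (pd i (pd j Y)) p) - (pd a (pd 0 Y) p * pd i (pd j X) p + pd 0 Y p * pd a (pd i (pd j X)) p)) p"
  unfolding N1_def[abs_def]
  using smooth_hvd[OF smX p, of a "[0]"] smooth_hvd[OF smX p, of a "[i,j]"]
    smooth_hvd[OF smY p, of a "[0]"] smooth_hvd[OF smY p, of a "[i,j]"]
  by (intro hvd_diff hvd_mult) simp_all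

lemma pd_Gm0: assumes p: "p \<in> U" shows "pd a (Gm 0 i j) p =
  (((pd a (pd 1 Y) p * pd i (pd j X) p + pd 1 Y p * pd a (pd i (pd j X)) p) - (pd a (pd 1 X) p * pd i (pd j Y) p + pd 1 X p * pd a (pd i (pd j Y)) p)) * Dt p
   - N0 i j p * ((pd a (pd 0 X) p * pd 1 Y p + pd 0 X p * pd a (pd 1 Y) p) - (pd a (pd 1 X) p * pd 0 Y p + pd 1 X p * pd a (pd 0 Y) p)))
  / (Dt p * Dt p)"
  unfolding Gm0 by (rule hvd_pd, rule hvd_divide[OF hvd_N0[OF p] hvd_Dt[OF p] Dt_nz[OF p]])

lemma pd_Gm1: assumes p: "p \<in> U" shows "pd a (Gm 1 i j) p =
  (((pd a (pd 0 X) p * pd i (pd j Y) p + pd 0 X p * pd a (pd i (pd j Y)) p) - (pd a (pd 0 Y) p * pd i (pd j X) p + pd 0 Y p * pd a (pd i (pd j X)) p)) * Dt p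
   - N1 i j p * ((pd a (pd 0 X) p * pd 1 Y p + pd 0 X p * pd a (pd 1 Y) p) - (pd a (pd 1 X) p * pd 0 Y p + pd 1 X p * pd a (pd 0 Y) p)))
  / (Dt p * Dt p)"
  unfolding Gm1 by (rule hvd_pd, rule hvd_divide[OF hvd_N1[OF p] hvd_Dt[OF p] Dt_nz[OF p]])

lemma riem_zero: assumes p: "p \<in> U" and l: "l < 2" shows "riemann g p l 0 1 1 = 0"
proof -
  have d: "pd a (\<lambda>q. christoffel g q b c d) p = pd a (Gm b c d) p" if "b < 2" "c < 2" "d < 2" for a b c d
    by (rule pd_local[OF U p]) (rule chr, use that in auto)
  have s: "pd 1 (pd 0 X) p = pd 0 (pd 1 X) p" "pd 1 (pd 0 Y) p = pd 0 (pd 1 Y) p"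
    "pd 1 (pd 0 (pd 1 X)) p = pd 0 (pd 1 (pd 1 X)) p" "pd 1 (pd 0 (pd 1 Y)) p = pd 0 (pd 1 (pd 1 Y)) p"
    using clairaut[OF U smX p] clairaut[OF U smY p]
      clairaut[OF U smooth_pd[OF smX, of 1] p] clairaut[OF U smooth_pd[OF smY, of 1] p] by auto
  have nz: "Dt p \<noteq> 0" using Dt_nz[OF p] .
  have "l = 0 \<or> l = 1" using l by auto
  then show ?thesis
  proof
    assume l0: "l = 0"
    show ?thesis
      unfolding riemann_def l0 sum2 d[OF _ _ _] using nz
      apply (simp add: d chr[OF p] pd_Gm0[OF p] pd_Gm1[OF p] pd_Gm1[OF p, unfolded One_nat_def])
      apply (simp add: Gm_def N0_def N1_def s[unfolded One_nat_def])
      apply (simp add: Dt_def field_simps)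
      apply algebra
      done
  next
    assume l1: "l = 1"
    show ?thesis
      unfolding riemann_def l1 sum2 d[OF _ _ _] using nz
      apply (simp add: d chr[OF p] pd_Gm0[OF p] pd_Gm1[OF p] pd_Gm1[OF p, unfolded One_nat_def])
      apply (simp add: Gm_def N0_def N1_def s[unfolded One_nat_def])
      apply (simp add: Dt_def field_simps)
      apply algebra
      done
  qed
qed

lemma xcomp: assumes p: "p \<in> U"
  shows "pd i (pd j X) p = Gm 0 i j p * pd 0 X p + Gm 1 i j p * pd 1 X p"
    "pd i (pd j Y) p = Gm 0 i j p * pd 0 Y p + Gm 1 i j p * pd 1 Y p"
proof -
  have nz: "Dt p \<noteq> 0" using Dt_nz[OF p] .
  have fa: "a = n0/dd*x0 + n1/dd*x1" if "dd \<noteq> 0" "n0*x0 + n1*x1 = a*dd" for a n0 n1 dd x0 x1 :: real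
  proof -
    have "n0/dd*x0 + n1/dd*x1 = (n0*x0 + n1*x1)/dd" by (simp add: add_divide_distrib)
    then show ?thesis using that by simp
  qed
  show "pd i (pd j X) p = Gm 0 i j p * pd 0 X p + Gm 1 i j p * pd 1 X p"
    unfolding Gm_def by (rule fa[OF nz]) (simp add: Dt_def algebra_simps)
  show "pd i (pd j Y) p = Gm 0 i j p * pd 0 Y p + Gm 1 i j p * pd 1 Y p"
    unfolding Gm_def by (rule fa[OF nz]) (simp add: Dt_def algebra_simps)
qed

lemma W_eq: assumes p: "p \<in> U" and ij: "i < 2" "j < 2"
  shows "pd i (pd j (iota \<circ> f)) p - (\<Sum>k<2. christoffel gI p k i j *\<^sub>R pd k (iota \<circ> f) p)
     = (sff_d f p i j, 0, 0, sff_d f p i j)"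
proof -
  have a: "pd i (pd j (iota \<circ> f)) p = iota (pd i (pd j f) p)" using ipd_iota[OF p, of "[i,j]"] by simp
  have b: "pd k (iota \<circ> f) p = iota (pd k f p)" for k using ipd_iota[OF p, of "[k]"] by simp
  have c: "christoffel gI p k i j = Gm k i j p" if "k < 2" for k
    using chrI[OF p] chr[OF p ij that] by simp
  have c': "christoffel g p k i j = Gm k i j p" if "k < 2" for k
    using chr[OF p ij that] by simp
  show ?thesis
    unfolding sum2 a b sff_d_def
    using xcomp[OF p, of i j]
    by (simp add: c c' pd_f[OF p] pd2_f[OF p] iota_alt)
qed

lemma inv_eq: assumes p: "p \<in> U" shows "inv_metric gI p i j = inv_metric g p i j"
  unfolding inv_metric_def det_metric_def by (simp only: gI_eq[OF p])

lemma mean_zero: assumes p: "p \<in> U" and dm: "d_minimal U f"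
  shows "mean_curv_vec (iota \<circ> f) p = 0"
proof -
  have m: "(\<Sum>i<2. \<Sum>j<2. inv_metric g p i j * sff_d f p i j) = 0"
    using dm p unfolding d_minimal_def by blast
  have "mean_curv_vec (iota \<circ> f) p = (1/2) *\<^sub>R (\<Sum>i<2. \<Sum>j<2. inv_metric g p i j *\<^sub>R (sff_d f p i j, 0, 0, sff_d f p i j))"
    unfolding mean_curv_vec_def
    by (intro arg_cong[where f = "\<lambda>x. (1/2) *\<^sub>R x"] sum.cong refl) (simp add: W_eq[OF p] inv_eq[OF p])
  also have "\<dots> = 0" using m unfolding sum2 by (simp add: zero_prod_def)
  finally show ?thesis .
qed

lemma flat_pt: assumes p: "p \<in> U" shows "gauss_curv gI p = 0"
  unfolding gauss_curv_def sum2 riemannI[OF p] using riem_zero[OF p, of 0] riem_zero[OF p, of 1] by simp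

lemma space_pt: assumes p: "p \<in> U" shows "pos_def_at gI p"
  using nd p unfolding nondegenerate_def pos_def_at_def by (simp add: gI_eq[OF p])

end

theorem mainTheorem16:
  fixes U :: "(real \<times> real) set" and f :: "real \<times> real \<Rightarrow> real \<times> real \<times> real"
  assumes "open U"
    and "smooth_on U f"
    and "nondegenerate U f"
    and "d_minimal U f"
  shows "spacelike U (iota \<circ> f) \<and> flat U (iota \<circ> f) \<and> zero_mean_curv U (iota \<circ> f)"
  unfolding spacelike_def flat_def zero_mean_curv_def
  using space_pt[OF assms(1-3)] flat_pt[OF assms(1-3)] mean_zero[OF assms(1-3) _ assms(4)] by blast

end
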